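(* Let $G_1=(V_1,E_1)$ and $G_2=(V_2,E_2)$ be finite simple graphs with degree sequences $d_1$ and $d_2$. If $d_1$ is a rearrangement of $d_2$ (i.e., there is a bijection $\pi:V_1\to V_2$ with $d_2(\pi(v))=d_1(v)$ for all $v$), then $\dim\mathcal{A}(\widehat G_1)=\dim\mathcal{A}(\widehat G_2)$.
   Context: For a simple graph $G=(V,E)$, $\widehat G$ is the complete graph $(V,\binom{V}{2})$ with pairs in $E$ colored red and other pairs colored blue. For a 2-colored graph $H=(V,F)$, the alternating cone $\mathcal{A}(H)\subseteq\mathbb{R}^F$ is the set of $x\ge0$ such that at each vertex the sum of $x(e)$ over incident red edges equals the sum over incident blue edges. *)

theory Defs
  imports "HOL-Analysis.Analysis" "HOL-Library.Function_Algebras"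
begin

definition simple_graph :: "'a set \<Rightarrow> 'a set set \<Rightarrow> bool" where
  "simple_graph V E \<longleftrightarrow> finite V \<and> (\<forall>e\<in>E. e \<subseteq> V \<and> card e = 2)"

definition degree :: "'a set set \<Rightarrow> 'a \<Rightarrow> nat" where
  "degree E v = card {e\<in>E. v \<in> e}"

definition pairs :: "'a set \<Rightarrow> 'a set set" where
  "pairs V = {e. e \<subseteq> V \<and> card e = 2}"

text \<open>The alternating cone of the 2-coloured complete graph \<open>\<widehat>G\<close> (red = E, blue = pairs V - E),
  as a subset of R^F with F = pairs V, represented by functions on 'a set vanishing off F.\<close>
definition alt_cone_hat :: "'a set \<Rightarrow> 'a set set \<Rightarrow> ('a set \<Rightarrow> real) set" where
  "alt_cone_hat V E = {x. (\<forall>e. e \<notin> pairs V \<longrightarrow> x e = 0) \<and> (\<forall>e\<in>pairs V. 0 \<le> x e) \<and>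
     (\<forall>v\<in>V. (\<Sum>e\<in>{e\<in>pairs V. v \<in> e \<and> e \<in> E}. x e) = (\<Sum>e\<in>{e\<in>pairs V. v \<in> e \<and> e \<notin> E}. x e))}"

definition fscale :: "real \<Rightarrow> ('b \<Rightarrow> real) \<Rightarrow> ('b \<Rightarrow> real)" where
  "fscale c f = (\<lambda>x. c * f x)"

definition fdim :: "('b \<Rightarrow> real) set \<Rightarrow> nat" where
  "fdim S = vector_space.dim fscale S"

end

theory Submission imports Defs begin

lemma vs_fscale: "vector_space fscale"
  by unfold_locales (auto simp: fscale_def fun_eq_iff algebra_simps)

interpretation fs: vector_space fscale by (rule vs_fscale)

lemma fdim_eq: "fdim S = fs.dim S" by (simp add: fdim_def)

lemma linear_fscale_iff:
  "Vector_Spaces.linear fscale fscale f \<longleftrightarrow> (\<forall>x y. f (x + y) = f x + f y) \<and> (\<forall>c x. f (fscale c x) = fscale c (f x))"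
  by (simp add: Vector_Spaces.linear_iff vs_fscale)

lemma sum_fun_apply: "finite A \<Longrightarrow> (\<Sum>i\<in>A. g i) x = (\<Sum>i\<in>A. g i x)"
  by (induction A rule: finite_induct) auto

lemma in_span_delta:
  assumes "finite P" "\<forall>e. e \<notin> P \<longrightarrow> x e = 0"
  shows "x \<in> fs.span ((\<lambda>e f. if f = e then 1 else (0::real)) ` P)"
proof -
  have "x = (\<Sum>e\<in>P. fscale (x e) (\<lambda>f. if f = e then 1 else 0))"
    using assms by (auto simp: fun_eq_iff sum_fun_apply fscale_def if_distrib sum.If_cases cong: if_cong)
  also have "\<dots> \<in> fs.span ((\<lambda>e f. if f = e then 1 else (0::real)) ` P)"
    by (intro fs.span_sum fs.span_scale fs.span_base) auto
  finally show ?thesis .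
qed

lemma dim_mono_fin:
  assumes "X \<subseteq> fs.span T" "T \<subseteq> fs.span W" "finite W"
  shows "fs.dim X \<le> fs.dim T"
proof -
  obtain B where B: "B \<subseteq> T" "fs.independent B" "T \<subseteq> fs.span B" "card B = fs.dim T"
    using fs.basis_exists by blast
  have "B \<subseteq> fs.span W" using B assms by auto
  then have fB: "finite B" using fs.independent_span_bound[OF assms(3) B(2)] by auto
  have "X \<subseteq> fs.span B" using assms(1) B(3)
    by (metis fs.span_mono fs.span_span subset_trans)
  then show ?thesis using fs.dim_le_card[OF _ fB] B by auto
qed

lemma dim_image_fin:
  assumes lf: "Vector_Spaces.linear fscale fscale f" and "X \<subseteq> fs.span W" "finite W"
  shows "fs.dim (f ` X) \<le> fs.dim X"
proof -
  obtain B where B: "B \<subseteq> X" "fs.independent B" "X \<subseteq> fs.span B" "card B = fs.dim X"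
    using fs.basis_exists by blast
  have "B \<subseteq> fs.span W" using B assms by auto
  then have fB: "finite B" using fs.independent_span_bound[OF assms(3) B(2)] by auto
  interpret lf: Vector_Spaces.linear fscale fscale f by (rule lf)
  have "f ` X \<subseteq> fs.span (f ` B)" using lf.spans_image[OF B(3)] .
  then have "fs.dim (f ` X) \<le> card (f ` B)" using fs.dim_le_card fB by blast
  also have "\<dots> \<le> card B" using card_image_le fB by blast
  finally show ?thesis using B by simp
qed

lemma fdim_le_via:
  assumes "Vector_Spaces.linear fscale fscale L" "Vector_Spaces.linear fscale fscale R"
    and "\<forall>x\<in>S. R (L x) = x" and "L ` S \<subseteq> fs.span T" and "T \<subseteq> fs.span W" "finite W"
  shows "fdim S \<le> fdim T"
proof -
  have "S = R ` (L ` S)" using assms(3) by force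
  then have "fs.dim S = fs.dim (R ` (L ` S))" by simp
  also have "\<dots> \<le> fs.dim (L ` S)"
  proof (rule dim_image_fin[OF assms(2) _ assms(6)])
    show "L ` S \<subseteq> fs.span W" using assms(4,5)
      by (metis fs.span_mono fs.span_span subset_trans)
  qed
  also have "\<dots> \<le> fs.dim T" by (rule dim_mono_fin[OF assms(4,5,6)])
  finally show ?thesis by (simp add: fdim_eq)
qed


lemma finite_pairs: "finite V \<Longrightarrow> finite (pairs V)"
  unfolding pairs_def by (rule finite_subset[of _ "Pow V"]) auto

lemma signed_iff:
  fixes x :: "'a set \<Rightarrow> real"
  assumes "finite V"
  shows "((\<Sum>e\<in>{e\<in>pairs V. v \<in> e \<and> e \<in> E}. x e) = (\<Sum>e\<in>{e\<in>pairs V. v \<in> e \<and> e \<notin> E}. x e))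
     \<longleftrightarrow> (\<Sum>e\<in>{e\<in>pairs V. v \<in> e}. (if e \<in> E then x e else - x e)) = 0"
proof -
  have f: "finite {e\<in>pairs V. v \<in> e}" using finite_pairs[OF assms] by auto
  have "(\<Sum>e\<in>{e\<in>pairs V. v \<in> e}. (if e \<in> E then x e else - x e))
     = (\<Sum>e\<in>{e\<in>pairs V. v \<in> e} \<inter> {e. e \<in> E}. x e) + (\<Sum>e\<in>{e\<in>pairs V. v \<in> e} \<inter> - {e. e \<in> E}. - x e)"
    by (rule sum.If_cases[OF f])
  also have "{e\<in>pairs V. v \<in> e} \<inter> {e. e \<in> E} = {e\<in>pairs V. v \<in> e \<and> e \<in> E}" by auto
  also have "{e\<in>pairs V. v \<in> e} \<inter> - {e. e \<in> E} = {e\<in>pairs V. v \<in> e \<and> e \<notin> E}" by auto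
  finally have eq: "(\<Sum>e\<in>{e\<in>pairs V. v \<in> e}. (if e \<in> E then x e else - x e))
     = (\<Sum>e\<in>{e\<in>pairs V. v \<in> e \<and> e \<in> E}. x e) + (\<Sum>e\<in>{e\<in>pairs V. v \<in> e \<and> e \<notin> E}. - x e)" .
  have "(\<Sum>e\<in>{e\<in>pairs V. v \<in> e \<and> e \<notin> E}. - x e) = - (\<Sum>e\<in>{e\<in>pairs V. v \<in> e \<and> e \<notin> E}. x e)"
    by (simp add: sum_negf)
  then show ?thesis using eq by linarith
qed

lemma cone_iff:
  assumes "finite V"
  shows "x \<in> alt_cone_hat V E \<longleftrightarrow> (\<forall>e. e \<notin> pairs V \<longrightarrow> x e = 0) \<and> (\<forall>e\<in>pairs V. 0 \<le> x e) \<and>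
     (\<forall>v\<in>V. (\<Sum>e\<in>{e\<in>pairs V. v \<in> e}. (if e \<in> E then x e else - x e)) = 0)"
  unfolding alt_cone_hat_def mem_Collect_eq by (simp add: signed_iff[OF assms])

lemma cone_nonneg: "x \<in> alt_cone_hat V E \<Longrightarrow> 0 \<le> x e"
  unfolding alt_cone_hat_def by (cases "e \<in> pairs V") auto

lemma cone_span_fin:
  assumes "finite V"
  shows "alt_cone_hat V E \<subseteq> fs.span ((\<lambda>e f. if f = e then 1 else (0::real)) ` pairs V)"
  using in_span_delta[OF finite_pairs[OF assms]] unfolding alt_cone_hat_def by blast

lemma degree_pairs: "E \<subseteq> pairs V \<Longrightarrow> degree E v = card {e\<in>pairs V. v \<in> e \<and> e \<in> E}"
  unfolding degree_def by (rule arg_cong[where f=card]) auto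

lemma flip_le:
  assumes fin: "finite V" and E: "E \<subseteq> pairs V" and E': "E' \<subseteq> pairs V"
    and deg: "\<forall>v\<in>V. degree E v = degree E' v"
  shows "fdim (alt_cone_hat V E) \<le> fdim (alt_cone_hat V E')"
proof -
  define D where "D = (\<lambda>(x::'a set \<Rightarrow> real) e. if (e \<in> E) = (e \<in> E') then x e else - x e)"
  define w where "w = (\<lambda>e. if e \<in> pairs V \<and> (e \<in> E) \<noteq> (e \<in> E') then 1 else (0::real))"
  have linD: "Vector_Spaces.linear fscale fscale D"
    unfolding linear_fscale_iff D_def fscale_def by (auto simp: fun_eq_iff)
  have DD: "D (D x) = x" for x unfolding D_def by (auto simp: fun_eq_iff)
  have fP: "finite {e\<in>pairs V. v \<in> e}" for v using finite_pairs[OF fin] by auto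
  have wbal: "(\<Sum>e\<in>{e\<in>pairs V. v \<in> e}. (if e \<in> E' then w e else - w e)) = 0" if v: "v \<in> V" for v
  proof -
    have "(\<Sum>e\<in>{e\<in>pairs V. v \<in> e}. (if e \<in> E' then w e else - w e))
       = (\<Sum>e\<in>{e\<in>pairs V. v \<in> e}. (if e \<in> E' then 1 else 0) - (if e \<in> E then 1 else (0::real)))"
      by (rule sum.cong) (auto simp: w_def)
    also have "\<dots> = (\<Sum>e\<in>{e\<in>pairs V. v \<in> e}. (if e \<in> E' then 1 else 0)) - (\<Sum>e\<in>{e\<in>pairs V. v \<in> e}. (if e \<in> E then 1 else (0::real)))"
      by (rule sum_subtractf)
    also have "(\<Sum>e\<in>{e\<in>pairs V. v \<in> e}. (if e \<in> E' then 1 else (0::real))) = real (degree E' v)"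
    proof -
      have "(\<Sum>e\<in>{e\<in>pairs V. v \<in> e}. (if e \<in> E' then 1 else (0::real))) = (\<Sum>e\<in>{e\<in>{e\<in>pairs V. v \<in> e}. e \<in> E'}. 1)"
        by (rule sum.inter_filter[OF fP[of v], symmetric])
      also have "{e\<in>{e\<in>pairs V. v \<in> e}. e \<in> E'} = {e\<in>pairs V. v \<in> e \<and> e \<in> E'}" by auto
      finally show ?thesis using degree_pairs[OF E', of v] by simp
    qed
    also have "(\<Sum>e\<in>{e\<in>pairs V. v \<in> e}. (if e \<in> E then 1 else (0::real))) = real (degree E v)"
    proof -
      have "(\<Sum>e\<in>{e\<in>pairs V. v \<in> e}. (if e \<in> E then 1 else (0::real))) = (\<Sum>e\<in>{e\<in>{e\<in>pairs V. v \<in> e}. e \<in> E}. 1)"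
        by (rule sum.inter_filter[OF fP[of v], symmetric])
      also have "{e\<in>{e\<in>pairs V. v \<in> e}. e \<in> E} = {e\<in>pairs V. v \<in> e \<and> e \<in> E}" by auto
      finally show ?thesis using degree_pairs[OF E, of v] by simp
    qed
    finally show ?thesis using deg v by simp
  qed
  have wcone: "fscale t w \<in> alt_cone_hat V E'" if "0 \<le> t" for t
    unfolding cone_iff[OF fin]
  proof (intro conjI ballI allI impI)
    fix v assume v: "v \<in> V"
    have "(\<Sum>e\<in>{e\<in>pairs V. v \<in> e}. (if e \<in> E' then fscale t w e else - fscale t w e))
      = t * (\<Sum>e\<in>{e\<in>pairs V. v \<in> e}. (if e \<in> E' then w e else - w e))"
      by (simp add: sum_distrib_left fscale_def if_distrib cong: if_cong)
    then show "(\<Sum>e\<in>{e\<in>pairs V. v \<in> e}. (if e \<in> E' then fscale t w e else - fscale t w e)) = 0"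
      using wbal[OF v] by simp
  qed (use that in \<open>auto simp: fscale_def w_def\<close>)
  have Dspan: "D x \<in> fs.span (alt_cone_hat V E')" if x: "x \<in> alt_cone_hat V E" for x
  proof -
    define t where "t = (\<Sum>e\<in>pairs V. x e)"
    have t0: "0 \<le> t" unfolding t_def using cone_nonneg[OF x] by (simp add: sum_nonneg)
    have xle: "x e \<le> t" if "e \<in> pairs V" for e
      unfolding t_def using cone_nonneg[OF x] that finite_pairs[OF fin]
      by (intro member_le_sum) auto
    have xc: "(\<forall>e. e \<notin> pairs V \<longrightarrow> x e = 0) \<and> (\<forall>e\<in>pairs V. 0 \<le> x e) \<and>
     (\<forall>v\<in>V. (\<Sum>e\<in>{e\<in>pairs V. v \<in> e}. (if e \<in> E then x e else - x e)) = 0)"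
      using x cone_iff[OF fin] by blast
    have zc: "D x + fscale t w \<in> alt_cone_hat V E'"
      unfolding cone_iff[OF fin]
    proof (intro conjI ballI allI impI)
      fix v assume v: "v \<in> V"
      have "(\<Sum>e\<in>{e\<in>pairs V. v \<in> e}. (if e \<in> E' then (D x + fscale t w) e else - (D x + fscale t w) e))
        = (\<Sum>e\<in>{e\<in>pairs V. v \<in> e}. (if e \<in> E then x e else - x e))
          + t * (\<Sum>e\<in>{e\<in>pairs V. v \<in> e}. (if e \<in> E' then w e else - w e))"
        by (simp add: sum_distrib_left sum.distrib[symmetric] fscale_def D_def, rule sum.cong, auto simp: D_def fscale_def)
      then show "(\<Sum>e\<in>{e\<in>pairs V. v \<in> e}. (if e \<in> E' then (D x + fscale t w) e else - (D x + fscale t w) e)) = 0"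
        using wbal[OF v] xc v by simp
    next
      fix e assume "e \<notin> pairs V"
      then show "(D x + fscale t w) e = 0" using xc by (simp add: D_def w_def fscale_def)
    next
      fix e assume e: "e \<in> pairs V"
      show "0 \<le> (D x + fscale t w) e" using xle[OF e] xc e t0
        by (auto simp: D_def w_def fscale_def)
    qed
    have "D x = (D x + fscale t w) - fscale t w" by simp
    also have "\<dots> \<in> fs.span (alt_cone_hat V E')"
      by (intro fs.span_diff fs.span_base zc wcone t0)
    finally show ?thesis .
  qed
  show ?thesis
    by (rule fdim_le_via[OF linD linD _ _ cone_span_fin[OF fin]]) (use DD Dspan finite_pairs[OF fin] in auto)
qed




lemma bij_facts:
  assumes "bij_betw \<pi> V1 V2"
  defines "\<psi> \<equiv> the_inv_into V1 \<pi>"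
  shows "\<And>f. f \<subseteq> V1 \<Longrightarrow> \<psi> ` (\<pi> ` f) = f"
    and "\<And>e. e \<subseteq> V2 \<Longrightarrow> \<pi> ` (\<psi> ` e) = e"
    and "\<And>e. e \<subseteq> V2 \<Longrightarrow> \<psi> ` e \<subseteq> V1"
    and "\<And>f. f \<subseteq> V1 \<Longrightarrow> \<pi> ` f \<subseteq> V2"
    and "\<And>f. f \<subseteq> V1 \<Longrightarrow> card (\<pi> ` f) = card f"
    and "\<And>f v. f \<subseteq> V1 \<Longrightarrow> v \<in> V1 \<Longrightarrow> \<pi> v \<in> \<pi> ` f \<longleftrightarrow> v \<in> f"
    and "inj_on ((`) \<pi>) (Pow V1)"
proof -
  have inj: "inj_on \<pi> V1" and im: "\<pi> ` V1 = V2" using assms(1) by (auto simp: bij_betw_def)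
  show "\<And>f. f \<subseteq> V1 \<Longrightarrow> \<psi> ` (\<pi> ` f) = f"
    unfolding \<psi>_def using the_inv_into_f_f[OF inj] by (force simp: image_image)
  show "\<And>e. e \<subseteq> V2 \<Longrightarrow> \<pi> ` (\<psi> ` e) = e"
    unfolding \<psi>_def using f_the_inv_into_f[OF inj] im by (force simp: image_image)
  show "\<And>e. e \<subseteq> V2 \<Longrightarrow> \<psi> ` e \<subseteq> V1"
    unfolding \<psi>_def using the_inv_into_into[OF inj] im by blast
  show "\<And>f. f \<subseteq> V1 \<Longrightarrow> \<pi> ` f \<subseteq> V2" using im by blast
  show "\<And>f. f \<subseteq> V1 \<Longrightarrow> card (\<pi> ` f) = card f"
    using inj by (meson card_image inj_on_subset)
  show "\<And>f v. f \<subseteq> V1 \<Longrightarrow> v \<in> V1 \<Longrightarrow> \<pi> v \<in> \<pi> ` f \<longleftrightarrow> v \<in> f"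
    using inj by (meson inj_on_image_mem_iff)
  show "inj_on ((`) \<pi>) (Pow V1)"
    using inj by (auto simp: inj_on_def inj_on_image_eq_iff)
qed

lemma degree_transport:
  assumes "bij_betw \<pi> V1 V2" "E \<subseteq> Pow V1" "v \<in> V1"
  shows "degree ((`) \<pi> ` E) (\<pi> v) = degree E v"
proof -
  note bf = bij_facts[OF assms(1)]
  have "{e\<in>(`) \<pi> ` E. \<pi> v \<in> e} = (`) \<pi> ` {f\<in>E. v \<in> f}"
  proof -
    have h: "\<pi> v \<in> \<pi> ` f \<longleftrightarrow> v \<in> f" if "f \<in> E" for f
    proof -
      have "f \<subseteq> V1" using that assms(2) by auto
      then show ?thesis using bf(6)[of f v] assms(3) by simp
    qed
    show ?thesis
    proof
      show "{e\<in>(`) \<pi> ` E. \<pi> v \<in> e} \<subseteq> (`) \<pi> ` {f\<in>E. v \<in> f}"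
      proof
        fix e assume "e \<in> {e\<in>(`) \<pi> ` E. \<pi> v \<in> e}"
        then obtain f where "f \<in> E" "e = \<pi> ` f" "\<pi> v \<in> e" by blast
        then show "e \<in> (`) \<pi> ` {f\<in>E. v \<in> f}" using h by blast
      qed
      show "(`) \<pi> ` {f\<in>E. v \<in> f} \<subseteq> {e\<in>(`) \<pi> ` E. \<pi> v \<in> e}" by blast
    qed
  qed
  moreover have "inj_on ((`) \<pi>) {f\<in>E. v \<in> f}"
    by (rule inj_on_subset[OF bf(7)]) (use assms(2) in auto)
  ultimately show ?thesis unfolding degree_def by (simp add: card_image)
qed

lemma transport_le:
  assumes fin: "finite V1" and bij: "bij_betw \<pi> V1 V2" and E: "E \<subseteq> Pow V1"
  shows "fdim (alt_cone_hat V1 E) \<le> fdim (alt_cone_hat V2 ((`) \<pi> ` E))"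
proof -
  define \<psi> where "\<psi> = the_inv_into V1 \<pi>"
  note bf = bij_facts[OF bij, folded \<psi>_def]
  have fin2: "finite V2" using bij fin bij_betw_finite by blast
  define L where "L = (\<lambda>(x::'a set \<Rightarrow> real) e. if e \<subseteq> V2 then x (\<psi> ` e) else 0)"
  define R where "R = (\<lambda>(y::'b set \<Rightarrow> real) e. if e \<subseteq> V1 then y (\<pi> ` e) else 0)"
  have linL: "Vector_Spaces.linear fscale fscale L"
    unfolding linear_fscale_iff L_def fscale_def by (auto simp: fun_eq_iff)
  have linR: "Vector_Spaces.linear fscale fscale R"
    unfolding linear_fscale_iff R_def fscale_def by (auto simp: fun_eq_iff)
  have pairs_im: "{e\<in>pairs V2. Q e} = (`) \<pi> ` {f\<in>pairs V1. Q (\<pi> ` f)}" for Q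
  proof
    show "{e\<in>pairs V2. Q e} \<subseteq> (`) \<pi> ` {f\<in>pairs V1. Q (\<pi> ` f)}"
    proof
      fix e assume e: "e \<in> {e\<in>pairs V2. Q e}"
      then have e2: "e \<subseteq> V2" "card e = 2" "Q e" by (auto simp: pairs_def)
      have "\<psi> ` e \<in> {f\<in>pairs V1. Q (\<pi> ` f)}"
        using e2 bf(5)[of "\<psi> ` e"] bf(2)[of e] bf(3)[of e] by (auto simp: pairs_def)
      moreover have "e = \<pi> ` (\<psi> ` e)" using bf(2) e2 by simp
      ultimately show "e \<in> (`) \<pi> ` {f\<in>pairs V1. Q (\<pi> ` f)}" by blast
    qed
    show "(`) \<pi> ` {f\<in>pairs V1. Q (\<pi> ` f)} \<subseteq> {e\<in>pairs V2. Q e}"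
      using bf(4,5) by (auto simp: pairs_def)
  qed
  have injP: "inj_on ((`) \<pi>) {f\<in>pairs V1. P f}" for P
    using bf(7) by (rule inj_on_subset) (auto simp: pairs_def)
  have memE: "f \<subseteq> V1 \<Longrightarrow> \<pi> ` f \<in> (`) \<pi> ` E \<longleftrightarrow> f \<in> E" for f
  proof
    assume f: "f \<subseteq> V1" and "\<pi> ` f \<in> (`) \<pi> ` E"
    then obtain g where g: "g \<in> E" "\<pi> ` f = \<pi> ` g" by blast
    then have "f = g" using inj_onD[OF bf(7), of f g] f E by blast
    then show "f \<in> E" using g by simp
  qed auto
  have RL: "R (L x) = x" if x: "x \<in> alt_cone_hat V1 E" for x
  proof
    fix e show "R (L x) e = x e"
    proof (cases "e \<subseteq> V1")
      case True then show ?thesis using bf(1,4) by (simp add: R_def L_def)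
    next
      case False
      then have "e \<notin> pairs V1" by (auto simp: pairs_def)
      then show ?thesis using x False by (simp add: R_def alt_cone_hat_def)
    qed
  qed
  have Lcone: "L x \<in> alt_cone_hat V2 ((`) \<pi> ` E)" if x: "x \<in> alt_cone_hat V1 E" for x
    unfolding alt_cone_hat_def mem_Collect_eq
  proof (intro conjI allI impI ballI)
    fix e assume e: "e \<notin> pairs V2"
    show "L x e = 0"
    proof (cases "e \<subseteq> V2")
      case True
      then have "\<psi> ` e \<notin> pairs V1" using e bf(5)[of "\<psi> ` e"] bf(2)[of e] bf(3)[of e] True by (auto simp: pairs_def)
      then show ?thesis using x True by (simp add: L_def alt_cone_hat_def)
    qed (simp add: L_def)
  next
    fix e show "0 \<le> L x e" using cone_nonneg[OF x] by (simp add: L_def)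
  next
    fix w assume w: "w \<in> V2"
    define v where "v = \<psi> w"
    have v: "v \<in> V1" "\<pi> v = w" using bf(3)[of "{w}"] bf(2)[of "{w}"] w by (auto simp: v_def)
    have xb: "(\<Sum>e\<in>{e\<in>pairs V1. v \<in> e \<and> e \<in> E}. x e) = (\<Sum>e\<in>{e\<in>pairs V1. v \<in> e \<and> e \<notin> E}. x e)"
      using x v by (auto simp: alt_cone_hat_def)
    have S: "(\<Sum>e\<in>{e\<in>pairs V2. w \<in> e \<and> P e}. L x e) = (\<Sum>f\<in>{f\<in>pairs V1. v \<in> f \<and> P (\<pi> ` f)}. x f)" for P
    proof -
      have "{e\<in>pairs V2. w \<in> e \<and> P e} = (`) \<pi> ` {f\<in>pairs V1. w \<in> \<pi> ` f \<and> P (\<pi> ` f)}"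
        by (rule pairs_im)
      also have "{f\<in>pairs V1. w \<in> \<pi> ` f \<and> P (\<pi> ` f)} = {f\<in>pairs V1. v \<in> f \<and> P (\<pi> ` f)}"
        using bf(6) v by (auto simp: pairs_def)
      finally have eq: "{e\<in>pairs V2. w \<in> e \<and> P e} = (`) \<pi> ` {f\<in>pairs V1. v \<in> f \<and> P (\<pi> ` f)}" .
      show ?thesis unfolding eq
        by (subst sum.reindex[OF injP]) (use bf(1,4) in \<open>auto simp: L_def pairs_def intro!: sum.cong\<close>)
    qed
    have A: "{f\<in>pairs V1. v \<in> f \<and> \<pi> ` f \<in> (`) \<pi> ` E} = {e\<in>pairs V1. v \<in> e \<and> e \<in> E}"
      using memE by (auto simp: pairs_def)
    have B: "{f\<in>pairs V1. v \<in> f \<and> \<pi> ` f \<notin> (`) \<pi> ` E} = {e\<in>pairs V1. v \<in> e \<and> e \<notin> E}"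
      using memE by (auto simp: pairs_def)
    show "(\<Sum>e\<in>{e\<in>pairs V2. w \<in> e \<and> e \<in> (`) \<pi> ` E}. L x e) = (\<Sum>e\<in>{e\<in>pairs V2. w \<in> e \<and> e \<notin> (`) \<pi> ` E}. L x e)"
      using S[of "\<lambda>e. e \<in> (`) \<pi> ` E"] S[of "\<lambda>e. e \<notin> (`) \<pi> ` E"] A B xb by simp
  qed
  show ?thesis
    by (rule fdim_le_via[OF linL linR _ _ cone_span_fin[OF fin2]])
       (use RL Lcone finite_pairs[OF fin2] in \<open>auto intro: fs.span_base\<close>)
qed


theorem lemma2p7:
  fixes V1 :: "'a set" and E1 :: "'a set set" and V2 :: "'b set" and E2 :: "'b set set"
  assumes "simple_graph V1 E1" and "simple_graph V2 E2"
    and "bij_betw \<pi> V1 V2"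
    and "\<forall>v\<in>V1. degree E2 (\<pi> v) = degree E1 v"
  shows "fdim (alt_cone_hat V1 E1) = fdim (alt_cone_hat V2 E2)"
proof -
  define \<psi> where "\<psi> = the_inv_into V1 \<pi>"
  have fin1: "finite V1" and E1: "E1 \<subseteq> pairs V1"
    using assms(1) by (auto simp: simple_graph_def pairs_def)
  have fin2: "finite V2" and E2: "E2 \<subseteq> pairs V2"
    using assms(2) by (auto simp: simple_graph_def pairs_def)
  have bij: "bij_betw \<pi> V1 V2" by fact
  have inj: "inj_on \<pi> V1" and im: "\<pi> ` V1 = V2" using bij by (auto simp: bij_betw_def)
  have bij': "bij_betw \<psi> V2 V1" unfolding \<psi>_def by (rule bij_betw_the_inv_into[OF bij])
  have pp: "\<psi> (\<pi> v) = v" if "v \<in> V1" for v unfolding \<psi>_def using the_inv_into_f_f[OF inj that] .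
  have qq: "\<pi> (\<psi> w) = w" if "w \<in> V2" for w unfolding \<psi>_def using f_the_inv_into_f[OF inj] that im by blast
  have qV: "\<psi> w \<in> V1" if "w \<in> V2" for w using bij' that bij_betwE by blast
  have E1P: "E1 \<subseteq> Pow V1" and E2P: "E2 \<subseteq> Pow V2" using E1 E2 by (auto simp: pairs_def)
  note bf1 = bij_facts[OF bij]
  note bf2 = bij_facts[OF bij']
  have E1': "(`) \<pi> ` E1 \<subseteq> pairs V2"
  proof
    fix e assume "e \<in> (`) \<pi> ` E1"
    then obtain f where f: "f \<in> E1" "e = \<pi> ` f" by blast
    then have "f \<subseteq> V1" "card f = 2" using E1 by (auto simp: pairs_def)
    then show "e \<in> pairs V2" using f bf1(4,5) by (auto simp: pairs_def)
  qed
  have E2': "(`) \<psi> ` E2 \<subseteq> pairs V1"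
  proof
    fix e assume "e \<in> (`) \<psi> ` E2"
    then obtain f where f: "f \<in> E2" "e = \<psi> ` f" by blast
    then have "f \<subseteq> V2" "card f = 2" using E2 by (auto simp: pairs_def)
    then show "e \<in> pairs V1" using f bf2(4,5) by (auto simp: pairs_def)
  qed
  have "fdim (alt_cone_hat V1 E1) \<le> fdim (alt_cone_hat V2 ((`) \<pi> ` E1))"
    by (rule transport_le[OF fin1 bij E1P])
  also have "\<dots> \<le> fdim (alt_cone_hat V2 E2)"
  proof (rule flip_le[OF fin2 E1' E2], intro ballI)
    fix w assume w: "w \<in> V2"
    have "degree ((`) \<pi> ` E1) w = degree ((`) \<pi> ` E1) (\<pi> (\<psi> w))" using qq[OF w] by simp
    also have "\<dots> = degree E1 (\<psi> w)" by (rule degree_transport[OF bij E1P qV[OF w]])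
    also have "\<dots> = degree E2 (\<pi> (\<psi> w))" using assms(4) qV[OF w] by simp
    also have "\<dots> = degree E2 w" using qq[OF w] by simp
    finally show "degree ((`) \<pi> ` E1) w = degree E2 w" .
  qed
  finally have le1: "fdim (alt_cone_hat V1 E1) \<le> fdim (alt_cone_hat V2 E2)" .
  have "fdim (alt_cone_hat V2 E2) \<le> fdim (alt_cone_hat V1 ((`) \<psi> ` E2))"
    by (rule transport_le[OF fin2 bij' E2P])
  also have "\<dots> \<le> fdim (alt_cone_hat V1 E1)"
  proof (rule flip_le[OF fin1 E2' E1], intro ballI)
    fix v assume v: "v \<in> V1"
    have pv: "\<pi> v \<in> V2" using v im by blast
    have "degree ((`) \<psi> ` E2) v = degree ((`) \<psi> ` E2) (\<psi> (\<pi> v))" using pp[OF v] by simp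
    also have "\<dots> = degree E2 (\<pi> v)" by (rule degree_transport[OF bij' E2P pv])
    also have "\<dots> = degree E1 v" using assms(4) v by simp
    finally show "degree ((`) \<psi> ` E2) v = degree E1 v" .
  qed
  finally have le2: "fdim (alt_cone_hat V2 E2) \<le> fdim (alt_cone_hat V1 E1)" .
  show ?thesis using le1 le2 by simp
qed

end
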